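(* Assume the collections $\mathscr C_{S,i,j}$ satisfy hypotheses (1)–(3) below, and let $\mathscr T\in\mathcal S_{\mathscr C}$. Let $i,j,l\in[5]$ be distinct, $f_1\in\Delta_{(ij)}$ and $f_2\in\Delta_{(il)}$. Then $\mathscr T$ does not have a flip supported on the circuit $X_{ij}^{f_1f_2}=((X_{ij}^{f_1f_2})^+,(X_{ij}^{f_1f_2})^-)$, where $(X_{ij}^{f_1f_2})^+=\{(e_i,f_1),(e_j,f_2)\}$ and $(X_{ij}^{f_1f_2})^-=\{(e_j,f_1),(e_i,f_2)\}$. Hypotheses: for each $S\in\binom{[5]}{4}$ and distinct $i,j\in S$, $\mathscr C_{S,i,j}$ is a collection of zonotopal triangulations $\mathscr T_{i_1i_2i_3}^{f_1f_2f_3}$ with $i_1,i_2,i_3\in S$, such that for each member, with $\{i_4\}=S\setminus\{i_1,i_2,i_3\}$: (1) there exist $f_1'\in\Delta_{(i_1i_4)}$, $f_2'\in\Delta_{(i_2i_4)}$, $f_3'\in\Delta_{(i_3i_4)}$ with $\mathscr T_{i_1i_2i_4}^{f_1f_2'f_1'},\mathscr T_{i_2i_3i_4}^{f_2f_3'f_2'},\mathscr T_{i_3i_1i_4}^{f_3f_1'f_3'}\in\mathscr C_{S,i,j}$; (2) if $i_1=i,i_2=j$, there exist such $f_1',f_2',f_3'$ with $\mathscr T_{i_1i_2i_4}^{f_1f_2'f_1'},\mathscr T_{i_3i_2i_4}^{f_2f_2'f_3'},\mathscr T_{i_1i_3i_4}^{f_3f_3'f_1'}\in\mathscr C_{S,i,j}$;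 and (3) for all distinct $i,j,l\in[5]$ and $f_1\in\Delta_{(ij)}$ there exist $k\in[5]\setminus\{i,j,l\}$, $f_2\in\Delta_{(jk)}$, $f_3\in\Delta_{(ki)}$ with $\mathscr T_{ijk}^{f_1f_2f_3}\in\mathscr C_{[5]\setminus\{l\},i,j}$. $\mathcal S_{\mathscr C}$ is the set of triangulations $\mathscr T$ of $A$ such that (i) every member of every $\mathscr C_{S,i,j}$ is a subset of $\mathscr T$, and (ii) for all $S$, distinct $i,j\in S$, $\mathscr T_{ijk}^{f_1f_2f_3}\in\mathscr C_{S,i,j}$ with $k\in S\setminus\{i,j\}$, $\{l\}=[5]\setminus S$ and $f\in\Delta_{(il)}$, we have $(X_{ijk}^{f_1f_2f_3}\setminus\{(e_i,f_1)\})\cup\{(e_i,f)\}\in\mathscr T$.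
   Context: General conventions. For a finite point set $A\subset\mathbb R^d$: a cell is a subset of $A$; a simplex is an affinely independent cell; a face of a cell $C$ is a subset $F\subseteq C$ which is the set of minimizers on $C$ of some linear functional. A triangulation of $A$ is a collection $\mathscr T$ of simplices of $A$, closed under taking faces, such that for all $\sigma,\sigma'\in\mathscr T$, $\mathrm{conv}(\sigma)\cap\mathrm{conv}(\sigma')=\mathrm{conv}(F)$ for a common face $F$ of $\sigma$ and $\sigma'$, and such that $\bigcup_{\sigma\in\mathscr T}\mathrm{conv}(\sigma)=\mathrm{conv}(A)$. A circuit is a minimal affinely dependent subset $X$; it satisfies an affine dependence $\sum_{x\in X}\lambda_x x=0$, $\sum\lambda_x=0$, all $\lambda_x\neq0$, unique up to scaling, which partitions $X=X^+\cup X^-$ into the points with positive and with negative coefficients; writing $X=(X^+,X^-)$ fixes a choice of sign. Set $\mathscr T_X^+:=\{\sigma\subseteq X:X^+\not\subseteq\sigma\}$ and $\mathscr T_X^-:=\{\sigma\subseteq X:X^-\not\subseteq\sigma\}$. For $C\in\mathscr T$, $\mathrm{link}_{\mathscr T}(C):=\{C'\in\mathscr T: C\cap C'=\emptyset,\ C\cup C'\in\mathscr T\}$. A triangulation $\mathscr T$ of $A$ has a flip supported on the circuit $(X^+,X^-)$, $X\subseteq A$, if $\mathscr T_X^+\subseteq\mathscr T$ and all inclusion-maximal elements of $\mathscr T_X^+$ have the same link $\mathscr L$ in $\mathscr T$. Setting. $\Gamma_5^2$ is the set of unordered pairs $(ij)=(ji)$ of distinct elements of $[5]$. For each $\alpha\in\Gamma_5^2$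 let $\Delta_\alpha$ be a finite set, the sets being pairwise disjoint, and let $\Delta^{n-1}:=\bigcup_\alpha\Delta_\alpha$ be the standard basis of $\mathbb R^n$. Let $e_1,\dots,e_5$ be the standard basis of $\mathbb R^5$ and $A:=\Delta^4\times\Delta^{n-1}=\{(e_i,f):i\in[5],f\in\Delta^{n-1}\}$. For distinct $i_1,\dots,i_t\in[5]$ and distinct $f_1,\dots,f_t\in\Delta^{n-1}$, $X_{i_1\cdots i_t}^{f_1\cdots f_t}$ is the circuit of $A$ with affine dependence $(e_{i_1},f_1)-(e_{i_2},f_1)+(e_{i_2},f_2)-(e_{i_3},f_2)+\dots+(e_{i_t},f_t)-(e_{i_1},f_t)=0$, with $+$ and $-$ parts read off from these signs, and $\mathscr T_{i_1\cdots i_t}^{f_1\cdots f_t}:=\mathscr T^+_{X_{i_1\cdots i_t}^{f_1\cdots f_t}}$. It is called zonotopal if $f_1\in\Delta_{(i_1i_2)},\dots,f_t\in\Delta_{(i_ti_1)}$. *)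

theory Defs
  imports "HOL-Analysis.Analysis"
begin

text \<open>The index set [5] is the numeral type 5. The basis
\<Delta>^{n-1} of R^n is an arbitrary finite type 'f (so n = CARD('f)). The partition
of \<Delta>^{n-1} into the blocks \<Delta>_(ij), (ij) an unordered pair of distinct elements
of [5], is encoded by a labelling lab :: 'f => 5 set with card (lab f) = 2:
f belongs to \<Delta>_(ij) iff lab f = {i,j}.  A point (e_i, f) of A is the pair (i, f);
its embedding into R^5 x R^n is pt (i, f).\<close>

definition Delta :: "('f \<Rightarrow> 5 set) \<Rightarrow> 5 \<Rightarrow> 5 \<Rightarrow> 'f set" where
  "Delta lab i j = {f. lab f = {i, j}}"

definition pt :: "5 \<times> 'f::finite \<Rightarrow> (real^5) \<times> (real^'f)" where
  "pt p = (axis (fst p) 1, axis (snd p) 1)"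

definition cell_face :: "(5 \<times> 'f::finite) set \<Rightarrow> (5 \<times> 'f) set \<Rightarrow> bool" where
  "cell_face F C \<longleftrightarrow> F \<subseteq> C \<and>
     (F = {} \<or> (\<exists>c. F = {x\<in>C. \<forall>y\<in>C. c \<bullet> pt x \<le> c \<bullet> pt y}))"

definition triangulation :: "(5 \<times> 'f::finite) set set \<Rightarrow> bool" where
  "triangulation T \<longleftrightarrow>
     (\<forall>\<sigma>\<in>T. \<not> affine_dependent (pt ` \<sigma>)) \<and>
     (\<forall>\<sigma>\<in>T. \<forall>F. cell_face F \<sigma> \<longrightarrow> F \<in> T) \<and>
     (\<forall>\<sigma>\<in>T. \<forall>\<sigma>'\<in>T. \<exists>F. cell_face F \<sigma> \<and> cell_face F \<sigma>' \<and>
        convex hull (pt ` \<sigma>) \<inter> convex hull (pt ` \<sigma>') = convex hull (pt ` F)) \<and>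
     (\<Union>\<sigma>\<in>T. convex hull (pt ` \<sigma>)) = convex hull (range pt)"

definition Tplus :: "'a set \<Rightarrow> 'a set \<Rightarrow> 'a set set" where
  "Tplus Xp Xm = {\<sigma>. \<sigma> \<subseteq> Xp \<union> Xm \<and> \<not> Xp \<subseteq> \<sigma>}"

definition link :: "'a set set \<Rightarrow> 'a set \<Rightarrow> 'a set set" where
  "link T C = {C'\<in>T. C \<inter> C' = {} \<and> C \<union> C' \<in> T}"

definition maximal_elems :: "'a set set \<Rightarrow> 'a set set" where
  "maximal_elems P = {\<sigma>\<in>P. \<forall>\<sigma>'\<in>P. \<sigma> \<subseteq> \<sigma>' \<longrightarrow> \<sigma>' = \<sigma>}"

definition has_flip :: "'a set set \<Rightarrow> 'a set \<Rightarrow> 'a set \<Rightarrow> bool" where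
  "has_flip T Xp Xm \<longleftrightarrow> Tplus Xp Xm \<subseteq> T \<and>
     (\<exists>L. \<forall>\<sigma>\<in>maximal_elems (Tplus Xp Xm). link T \<sigma> = L)"

definition Xplus :: "5 list \<Rightarrow> 'f list \<Rightarrow> (5 \<times> 'f) set" where
  "Xplus is fs = {(is ! s, fs ! s) | s. s < length is}"

definition Xminus :: "5 list \<Rightarrow> 'f list \<Rightarrow> (5 \<times> 'f) set" where
  "Xminus is fs = {(is ! ((s + 1) mod length is), fs ! s) | s. s < length is}"

definition Xset :: "5 list \<Rightarrow> 'f list \<Rightarrow> (5 \<times> 'f) set" where
  "Xset is fs = Xplus is fs \<union> Xminus is fs"

definition T3 :: "5 \<Rightarrow> 5 \<Rightarrow> 5 \<Rightarrow> 'f \<Rightarrow> 'f \<Rightarrow> 'f \<Rightarrow> (5 \<times> 'f) set set" where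
  "T3 i1 i2 i3 f1 f2 f3 = Tplus (Xplus [i1,i2,i3] [f1,f2,f3]) (Xminus [i1,i2,i3] [f1,f2,f3])"

definition zonotopal3 :: "('f \<Rightarrow> 5 set) \<Rightarrow> 5 \<Rightarrow> 5 \<Rightarrow> 5 \<Rightarrow> 'f \<Rightarrow> 'f \<Rightarrow> 'f \<Rightarrow> bool" where
  "zonotopal3 lab i1 i2 i3 f1 f2 f3 \<longleftrightarrow>
     f1 \<in> Delta lab i1 i2 \<and> f2 \<in> Delta lab i2 i3 \<and> f3 \<in> Delta lab i3 i1"

definition valid_Sij :: "5 set \<Rightarrow> 5 \<Rightarrow> 5 \<Rightarrow> bool" where
  "valid_Sij S i j \<longleftrightarrow> card S = 4 \<and> i \<in> S \<and> j \<in> S \<and> i \<noteq> j"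

definition rep_ok :: "('f \<Rightarrow> 5 set) \<Rightarrow> 5 set \<Rightarrow> 5 \<Rightarrow> 5 \<Rightarrow> 5 \<Rightarrow> 'f \<Rightarrow> 'f \<Rightarrow> 'f \<Rightarrow> bool" where
  "rep_ok lab S i1 i2 i3 f1 f2 f3 \<longleftrightarrow>
     distinct [i1, i2, i3] \<and> {i1, i2, i3} \<subseteq> S \<and> zonotopal3 lab i1 i2 i3 f1 f2 f3"

definition hyp_shape where
  "hyp_shape lab C \<longleftrightarrow> (\<forall>S i j. valid_Sij S i j \<longrightarrow>
     (\<forall>\<tau>\<in>C S i j. \<exists>i1 i2 i3 f1 f2 f3. rep_ok lab S i1 i2 i3 f1 f2 f3 \<and> \<tau> = T3 i1 i2 i3 f1 f2 f3))"

definition hyp1 where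
  "hyp1 lab C \<longleftrightarrow> (\<forall>S i j i1 i2 i3 i4 f1 f2 f3. valid_Sij S i j \<and> rep_ok lab S i1 i2 i3 f1 f2 f3 \<and>
     T3 i1 i2 i3 f1 f2 f3 \<in> C S i j \<and> S - {i1, i2, i3} = {i4} \<longrightarrow>
     (\<exists>f1' f2' f3'. f1' \<in> Delta lab i1 i4 \<and> f2' \<in> Delta lab i2 i4 \<and> f3' \<in> Delta lab i3 i4 \<and>
        T3 i1 i2 i4 f1 f2' f1' \<in> C S i j \<and> T3 i2 i3 i4 f2 f3' f2' \<in> C S i j \<and>
        T3 i3 i1 i4 f3 f1' f3' \<in> C S i j))"

definition hyp2 where
  "hyp2 lab C \<longleftrightarrow> (\<forall>S i j i1 i2 i3 i4 f1 f2 f3. valid_Sij S i j \<and> rep_ok lab S i1 i2 i3 f1 f2 f3 \<and>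
     T3 i1 i2 i3 f1 f2 f3 \<in> C S i j \<and> S - {i1, i2, i3} = {i4} \<and> i1 = i \<and> i2 = j \<longrightarrow>
     (\<exists>f1' f2' f3'. f1' \<in> Delta lab i1 i4 \<and> f2' \<in> Delta lab i2 i4 \<and> f3' \<in> Delta lab i3 i4 \<and>
        T3 i1 i2 i4 f1 f2' f1' \<in> C S i j \<and> T3 i3 i2 i4 f2 f2' f3' \<in> C S i j \<and>
        T3 i1 i3 i4 f3 f3' f1' \<in> C S i j))"

definition hyp3 where
  "hyp3 lab C \<longleftrightarrow> (\<forall>i j l f1. distinct [i, j, l] \<and> f1 \<in> Delta lab i j \<longrightarrow>
     (\<exists>k f2 f3. k \<notin> {i, j, l} \<and> f2 \<in> Delta lab j k \<and> f3 \<in> Delta lab k i \<and>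
        T3 i j k f1 f2 f3 \<in> C (UNIV - {l}) i j))"

definition S_C :: "('f::finite \<Rightarrow> 5 set) \<Rightarrow> (5 set \<Rightarrow> 5 \<Rightarrow> 5 \<Rightarrow> (5 \<times> 'f) set set set)
                   \<Rightarrow> (5 \<times> 'f) set set set" where
  "S_C lab C = {T. triangulation T \<and>
     (\<forall>S i j. valid_Sij S i j \<longrightarrow> (\<forall>\<tau>\<in>C S i j. \<tau> \<subseteq> T)) \<and>
     (\<forall>S i j k l f1 f2 f3 f. valid_Sij S i j \<and> k \<in> S - {i, j} \<and>
        rep_ok lab S i j k f1 f2 f3 \<and> T3 i j k f1 f2 f3 \<in> C S i j \<and>
        UNIV - S = {l} \<and> f \<in> Delta lab i l \<longrightarrow>
        (Xset [i, j, k] [f1, f2, f3] - {(i, f1)}) \<union> {(i, f)} \<in> T)}"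

end

theory Submission
  imports Defs
begin


lemma pt_inj: "inj pt"
  by (auto simp: inj_def pt_def axis_eq_axis prod_eq_iff)

lemma pt_eq_iff[simp]: "pt p = pt q \<longleftrightarrow> p = q"
  using pt_inj by (meson injD)

lemma absorb_pts:
  fixes V :: "'a::real_vector set"
  assumes fin: "finite V" and ind: "\<not> affine_dependent V" and WV: "W \<subseteq> V"
    and pW: "p \<in> convex hull W" and wpos: "\<forall>v\<in>V. 0 < w v" and ws: "sum w V = 1"
    and pw: "p = (\<Sum>v\<in>V. w v *\<^sub>R v)"
  shows "W = V"
proof (rule ccontr)
  assume ne: "W \<noteq> V"
  have finW: "finite W" using fin WV finite_subset by blast
  obtain u where u: "\<forall>x\<in>W. 0 \<le> u x" "sum u W = 1" "(\<Sum>x\<in>W. u x *\<^sub>R x) = p"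
    using pW convex_hull_finite[OF finW] by auto
  define u' where "u' v = (if v \<in> W then u v else 0)" for v
  have s1: "sum u' V = 1"
    using u(2) WV fin by (simp add: u'_def sum.If_cases Int_absorb1 inf.absorb2)
  have s2: "(\<Sum>v\<in>V. u' v *\<^sub>R v) = p"
  proof -
    have "(\<Sum>v\<in>V. u' v *\<^sub>R v) = (\<Sum>v\<in>V. if v \<in> W then u v *\<^sub>R v else 0)"
      by (rule sum.cong) (auto simp: u'_def)
    also have "\<dots> = (\<Sum>v\<in>V \<inter> W. u v *\<^sub>R v)"
      using fin by (simp add: sum.If_cases)
    also have "V \<inter> W = W" using WV by blast
    finally show ?thesis using u(3) by simp
  qed
  define g where "g v = w v - u' v" for v
  have g1: "sum g V = 0" using ws s1 by (simp add: g_def sum_subtractf)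
  have g2: "(\<Sum>v\<in>V. g v *\<^sub>R v) = 0"
    using pw s2 by (simp add: g_def scaleR_left_diff_distrib sum_subtractf)
  obtain z where z: "z \<in> V" "z \<notin> W" using ne WV by blast
  have "w z > 0" using z wpos by blast
  hence "g z \<noteq> 0" using z(2) by (simp add: g_def u'_def)
  hence "affine_dependent V"
    using affine_dependent_explicit_finite[OF fin] g1 g2 z by blast
  thus False using ind by simp
qed

lemma proper_sub:
  assumes "triangulation T" "\<rho> \<in> T" "\<sigma> \<in> T"
  shows "convex hull (pt ` \<rho>) \<inter> convex hull (pt ` \<sigma>) \<subseteq> convex hull (pt ` (\<rho> \<inter> \<sigma>))"
proof -
  obtain F where F: "cell_face F \<rho>" "cell_face F \<sigma>"
    "convex hull (pt ` \<rho>) \<inter> convex hull (pt ` \<sigma>) = convex hull (pt ` F)"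
    using assms unfolding triangulation_def by blast
  have "F \<subseteq> \<rho> \<inter> \<sigma>" using F(1,2) by (auto simp: cell_face_def)
  thus ?thesis using F(3) by (metis hull_mono image_mono)
qed

lemma absorb:
  fixes \<rho> \<sigma> :: "(5 \<times> 'f::finite) set"
  assumes T: "triangulation T" "\<rho> \<in> T" "\<sigma> \<in> T"
    and p: "p \<in> convex hull (pt ` \<rho>)"
    and wpos: "\<forall>v\<in>\<sigma>. 0 < w v" and ws: "sum w \<sigma> = 1"
    and pw: "p = (\<Sum>v\<in>\<sigma>. w v *\<^sub>R pt v)"
  shows "\<sigma> \<subseteq> \<rho>"
proof -
  have inj: "inj_on pt \<sigma>" using pt_inj by (simp add: inj_on_def)
  define w' where "w' z = w (inv pt z)" for z
  have fin: "finite (pt ` \<sigma>)" by simp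
  have ind: "\<not> affine_dependent (pt ` \<sigma>)" using T unfolding triangulation_def by blast
  have ws': "sum w' (pt ` \<sigma>) = 1"
    using ws by (simp add: sum.reindex[OF inj] w'_def o_def inv_f_f[OF pt_inj])
  have pw': "p = (\<Sum>v\<in>pt ` \<sigma>. w' v *\<^sub>R v)"
    using pw by (simp add: sum.reindex[OF inj] w'_def o_def inv_f_f[OF pt_inj])
  have wpos': "\<forall>v\<in>pt ` \<sigma>. 0 < w' v"
    using wpos by (auto simp: w'_def inv_f_f[OF pt_inj])
  have ex: "\<exists>u. (\<forall>x\<in>pt ` \<sigma>. 0 \<le> u x) \<and> sum u (pt ` \<sigma>) = 1 \<and> (\<Sum>x\<in>pt ` \<sigma>. u x *\<^sub>R x) = p"
    using ws' wpos' pw' by (intro exI[of _ w']) (auto intro: less_imp_le)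
  have pin: "p \<in> convex hull (pt ` \<sigma>)"
    using ex by (simp only: convex_hull_finite[OF fin] mem_Collect_eq)
  have pI: "p \<in> convex hull (pt ` (\<rho> \<inter> \<sigma>))" using proper_sub[OF T] p pin by blast
  have sub: "pt ` (\<rho> \<inter> \<sigma>) \<subseteq> pt ` \<sigma>" by (rule image_mono) (rule Int_lower2)
  have "pt ` (\<rho> \<inter> \<sigma>) = pt ` \<sigma>"
    by (rule absorb_pts[OF fin ind sub pI wpos' ws' pw'])
  hence "\<rho> \<inter> \<sigma> = \<sigma>" by (simp add: inj_image_eq_iff[OF pt_inj])
  thus ?thesis by blast
qed

lemma face_in_T:
  fixes \<rho> D :: "(5 \<times> 'f::finite) set"
  assumes T: "triangulation T" "\<rho> \<in> T" and D: "D \<subseteq> \<rho>"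
  shows "D \<in> T"
proof -
  have ind: "\<not> affine_dependent (pt ` \<rho>)" using T unfolding triangulation_def by blast
  have "cell_face D \<rho>"
  proof (cases "D = {}")
    case True thus ?thesis by (simp add: cell_face_def)
  next
    case False
    have fo: "convex hull (pt ` D) face_of convex hull (pt ` \<rho>)"
      using face_of_convex_hull_affine_independent[OF ind] D by blast
    have "polyhedron (convex hull (pt ` \<rho>))"
      by (simp add: polytope_convex_hull polytope_imp_polyhedron)
    hence "convex hull (pt ` D) exposed_face_of convex hull (pt ` \<rho>)"
      using fo exposed_face_of_polyhedron by blast
    then obtain a b where ab: "convex hull (pt ` \<rho>) \<subseteq> {x. a \<bullet> x \<le> b}"
      "convex hull (pt ` D) = convex hull (pt ` \<rho>) \<inter> {x. a \<bullet> x = b}"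
      unfolding exposed_face_of_def by blast
    have le: "a \<bullet> pt v \<le> b" if "v \<in> \<rho>" for v
      using ab(1) hull_inc[of "pt v" "pt ` \<rho>"] that by auto
    have eqD: "a \<bullet> pt v = b" if "v \<in> D" for v
      using ab(2) hull_inc[of "pt v" "pt ` D"] that by auto
    obtain d0 where d0: "d0 \<in> D" using False by blast
    have eq: "D = {x\<in>\<rho>. \<forall>y\<in>\<rho>. (-a) \<bullet> pt x \<le> (-a) \<bullet> pt y}"
    proof (intro equalityI subsetI)
      fix v assume v: "v \<in> D"
      thus "v \<in> {x\<in>\<rho>. \<forall>y\<in>\<rho>. (-a) \<bullet> pt x \<le> (-a) \<bullet> pt y}"
        using D eqD[OF v] le by auto
    next
      fix v assume v: "v \<in> {x\<in>\<rho>. \<forall>y\<in>\<rho>. (-a) \<bullet> pt x \<le> (-a) \<bullet> pt y}"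
      hence vr: "v \<in> \<rho>" and "(-a) \<bullet> pt v \<le> (-a) \<bullet> pt d0" using D d0 by auto
      hence "a \<bullet> pt v = b" using le[OF vr] eqD[OF d0] by auto
      hence hv: "pt v \<in> convex hull (pt ` D)"
        using ab(2) hull_inc[of "pt v" "pt ` \<rho>"] vr by auto
      show "v \<in> D"
      proof (rule ccontr)
        assume "v \<notin> D"
        hence "pt ` D \<subseteq> pt ` \<rho> - {pt v}" using D by auto
        hence "convex hull (pt ` D) \<subseteq> affine hull (pt ` \<rho> - {pt v})"
          by (meson convex_hull_subset_affine_hull hull_mono order_trans)
        hence "affine_dependent (pt ` \<rho>)"
          using hv vr unfolding affine_dependent_def by blast
        thus False using ind by simp
      qed
    qed
    show ?thesis unfolding cell_face_def by (intro conjI D disjI2 exI[of _ "-a"] eq)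
  qed
  thus ?thesis using T unfolding triangulation_def by blast
qed


lemma conv4:
  fixes S :: "'a::real_vector set"
  assumes "convex S" "p1 \<in> S" "p2 \<in> S" "p3 \<in> S" "p4 \<in> S"
    "0 \<le> c1" "0 \<le> c2" "0 \<le> c3" "0 \<le> c4" "c1 + c2 + c3 + c4 = 1"
  shows "c1 *\<^sub>R p1 + c2 *\<^sub>R p2 + c3 *\<^sub>R p3 + c4 *\<^sub>R p4 \<in> S"
proof -
  define cc where "cc n = (if n = (0::nat) then c1 else if n = 1 then c2 else if n = 2 then c3 else c4)" for n
  define pp where "pp n = (if n = (0::nat) then p1 else if n = 1 then p2 else if n = 2 then p3 else p4)" for n
  have "(\<Sum>n\<in>{0,1,2,3}. cc n *\<^sub>R pp n) \<in> S"
    by (rule convex_sum) (use assms in \<open>auto simp: cc_def pp_def\<close>)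
  thus ?thesis by (simp add: cc_def pp_def add.assoc)
qed

lemma id1: "((2-t)/4) *\<^sub>R (A + B) + (t/2) *\<^sub>R c = (1/2) *\<^sub>R ((1-t) *\<^sub>R ((1/4) *\<^sub>R A + (1/4) *\<^sub>R B + (1/2) *\<^sub>R X) + t *\<^sub>R c) + (1/4) *\<^sub>R A + (1/4) *\<^sub>R B - ((1-t)/4) *\<^sub>R X + (((1-t)/4)/2) *\<^sub>R (A + B)" for A B X c :: "'a::euclidean_space"
  by (rule euclidean_eqI) (simp add: inner_add_left inner_diff_left, simp add: field_simps)
lemma id2: "(1/2) *\<^sub>R (u *\<^sub>R X + v *\<^sub>R Z) + (1/4) *\<^sub>R A + (1/4) *\<^sub>R B - s *\<^sub>R X + (s/2) *\<^sub>R (A + B) = (u/2 - s) *\<^sub>R X + (v/2) *\<^sub>R Z + (1/4 + s/2) *\<^sub>R A + (1/4 + s/2) *\<^sub>R B" for A B X Z :: "'a::euclidean_space"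
  by (rule euclidean_eqI) (simp add: inner_add_left inner_diff_left, simp add: field_simps)
lemma id3: "(1/2) *\<^sub>R (u *\<^sub>R (A + B - Y) + v *\<^sub>R Z) + (1/4) *\<^sub>R A + (1/4) *\<^sub>R B - s *\<^sub>R (A + B - Y) + (s/2) *\<^sub>R (A + B) = (s - u/2) *\<^sub>R Y + (v/2) *\<^sub>R Z + (1/4 - s/2 + u/2) *\<^sub>R A + (1/4 - s/2 + u/2) *\<^sub>R B" for A B Y Z :: "'a::euclidean_space"
  by (rule euclidean_eqI) (simp add: inner_add_left inner_diff_left, simp add: field_simps)

lemma key:
  fixes T :: "(5 \<times> 'f::finite) set set" and a b x y :: "5 \<times> 'f"
  assumes T: "triangulation T"
    and M1: "{a,b,x} \<in> T" and M2: "{a,b,y} \<in> T"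
    and L: "link T {a,b,x} = link T {a,b,y}"
    and dist: "distinct [a,b,x,y]"
    and rel: "pt x + pt y = pt a + pt b"
    and \<sigma>: "\<sigma> \<in> T"
    and depx: "affine_dependent (pt ` insert x \<sigma>)" and depy: "affine_dependent (pt ` insert y \<sigma>)"
    and c: "c \<in> convex hull (range pt)"
    and rep: "\<And>t. 0 < t \<Longrightarrow> t < 1 \<Longrightarrow> \<exists>w. (\<forall>v\<in>\<sigma>. 0 < w v) \<and> sum w \<sigma> = 1 \<and>
       (\<Sum>v\<in>\<sigma>. w v *\<^sub>R pt v) = ((2-t)/4) *\<^sub>R (pt a + pt b) + (t/2) *\<^sub>R c"
  shows False
proof -
  define A where "A = pt a"
  define B where "B = pt b"
  define X where "X = pt x"
  define Y where "Y = pt y"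
  have finT: "finite T" by (rule finite_subset[of _ UNIV]) auto
  have cover: "(\<Union>\<sigma>\<in>T. convex hull (pt ` \<sigma>)) = convex hull (range pt)"
    using T unfolding triangulation_def by blast
  define Q where "Q = (1/4) *\<^sub>R A + (1/4) *\<^sub>R B + (1/2) *\<^sub>R X"
  have QM1: "Q = (\<Sum>v\<in>{a,b,x}. (if v = x then 1/2 else 1/4) *\<^sub>R pt v)"
    using dist by (simp add: Q_def A_def B_def X_def)
  have Qc: "Q \<in> convex hull (range pt)"
  proof -
    have "Q = (1/4) *\<^sub>R A + (1/4) *\<^sub>R B + (1/2) *\<^sub>R X + 0 *\<^sub>R X" by (simp add: Q_def)
    also have "\<dots> \<in> convex hull (range pt)"
      by (rule conv4) (auto simp: A_def B_def X_def intro: hull_inc)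
    finally show ?thesis .
  qed
  define Bad where "Bad = (\<Union>\<rho>\<in>{\<rho>\<in>T. Q \<notin> convex hull (pt ` \<rho>)}. convex hull (pt ` \<rho>))"
  have "closed Bad" unfolding Bad_def
    using finT by (intro closed_UN) (auto intro!: compact_imp_closed finite_imp_compact_convex_hull)
  moreover have "Q \<notin> Bad" unfolding Bad_def by blast
  ultimately obtain \<epsilon> where \<epsilon>: "\<epsilon> > 0" "ball Q \<epsilon> \<subseteq> - Bad"
    using open_contains_ball[of "- Bad"] by (auto simp: open_Compl)
  define t where "t = min (1/2) (\<epsilon> / (2 * (norm (c - Q) + 1)))"
  have epos: "0 < \<epsilon> / (2 * (norm (c - Q) + 1))"
    using \<epsilon> by (intro divide_pos_pos) (auto intro: add_nonneg_pos)
  have th: "t \<le> 1/2" unfolding t_def by (rule min.cobounded1)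
  have t0: "0 < t" "t < 1" using epos th unfolding t_def by auto
  have tn: "t * norm (c - Q) < \<epsilon>"
  proof -
    have "t * norm (c - Q) \<le> (\<epsilon> / (2 * (norm (c - Q) + 1))) * norm (c - Q)"
      by (rule mult_right_mono) (auto simp: t_def)
    also have "\<dots> = \<epsilon> * (norm (c - Q) / (2 * (norm (c - Q) + 1)))" by simp
    also have "\<dots> < \<epsilon> * 1"
    proof (rule mult_strict_left_mono)
      have "norm (c - Q) < 2 * (norm (c - Q) + 1)" by (simp add: add_nonneg_pos)
      thus "norm (c - Q) / (2 * (norm (c - Q) + 1)) < 1"
        by (subst divide_less_eq_1_pos) (use norm_ge_zero[of "c - Q"] in linarith)+
    qed (use \<epsilon> in auto)
    finally show ?thesis by simp
  qed
  define P where "P = (1 - t) *\<^sub>R Q + t *\<^sub>R c"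
  have PQ: "P \<in> ball Q \<epsilon>"
  proof -
    have "P - Q = t *\<^sub>R (c - Q)" by (simp add: P_def algebra_simps)
    hence "dist Q P = t * norm (c - Q)" using t0 by (simp add: dist_norm norm_minus_commute)
    thus ?thesis using tn by simp
  qed
  have "P \<in> convex hull (range pt)"
    unfolding P_def using Qc c t0 by (intro convexD) auto
  then obtain \<rho> where \<rho>: "\<rho> \<in> T" "P \<in> convex hull (pt ` \<rho>)" using cover by blast
  have Q\<rho>: "Q \<in> convex hull (pt ` \<rho>)"
  proof (rule ccontr)
    assume "Q \<notin> convex hull (pt ` \<rho>)"
    hence "P \<in> Bad" using \<rho> unfolding Bad_def by blast
    thus False using PQ \<epsilon> by blast
  qed
  have M1\<rho>: "{a,b,x} \<subseteq> \<rho>"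
    by (rule absorb[OF T \<rho>(1) M1 Q\<rho> _ _ QM1]) (use dist in auto)
  define D where "D = \<rho> - {a,b,x}"
  have DT: "D \<in> T" using face_in_T[OF T \<rho>(1)] D_def by blast
  have "{a,b,x} \<union> D = \<rho>" using M1\<rho> D_def by blast
  hence U: "{a,b,x} \<union> D \<in> T" using \<rho>(1) by simp
  have I: "{a,b,x} \<inter> D = {}" unfolding D_def by blast
  have "D \<in> link T {a,b,x}" unfolding link_def using DT U I by blast
  hence M2D: "{a,b,y} \<union> D \<in> T" using L unfolding link_def by blast
  have ne: "pt ` (\<rho> - {x}) \<noteq> {}" using M1\<rho> dist by auto
  have "pt ` \<rho> = insert X (pt ` (\<rho> - {x}))" using M1\<rho> X_def by auto
  then obtain u v Z where uvZ: "0 \<le> u" "0 \<le> v" "u + v = 1" "Z \<in> convex hull (pt ` (\<rho> - {x}))"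
    "P = u *\<^sub>R X + v *\<^sub>R Z"
    using \<rho>(2) convex_hull_insert[OF ne] by auto
  define s where "s = (1 - t) / 4"
  define R where "R = ((2-t)/4) *\<^sub>R (A + B) + (t/2) *\<^sub>R c"
  obtain w where w: "\<forall>v\<in>\<sigma>. 0 < w v" "sum w \<sigma> = 1" "(\<Sum>v\<in>\<sigma>. w v *\<^sub>R pt v) = R"
    using rep[OF t0] unfolding R_def A_def B_def by blast
  have Rexp: "R = (1/2) *\<^sub>R P + (1/4) *\<^sub>R A + (1/4) *\<^sub>R B - s *\<^sub>R X + (s/2) *\<^sub>R (A + B)"
    unfolding R_def P_def Q_def s_def by (rule id1)
  have A\<rho>: "A \<in> convex hull (pt ` (\<rho> - {x}))" and B\<rho>: "B \<in> convex hull (pt ` (\<rho> - {x}))"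
    using M1\<rho> dist by (auto simp: A_def B_def intro!: hull_inc)
  show False
  proof (cases "u/2 \<ge> s")
    case True
    have "R = (u/2 - s) *\<^sub>R X + (v/2) *\<^sub>R Z + (1/4 + s/2) *\<^sub>R A + (1/4 + s/2) *\<^sub>R B"
      unfolding Rexp uvZ(5) by (rule id2)
    also have "\<dots> \<in> convex hull (pt ` \<rho>)"
    proof (rule conv4)
      show "X \<in> convex hull (pt ` \<rho>)" using M1\<rho> by (auto simp: X_def intro!: hull_inc)
      have "convex hull (pt ` (\<rho> - {x})) \<subseteq> convex hull (pt ` \<rho>)" by (intro hull_mono image_mono) auto
      thus "Z \<in> convex hull (pt ` \<rho>)" "A \<in> convex hull (pt ` \<rho>)" "B \<in> convex hull (pt ` \<rho>)"
        using uvZ(4) A\<rho> B\<rho> by auto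
    qed (use True uvZ t0 s_def in auto)
    finally have "R \<in> convex hull (pt ` \<rho>)" .
    hence "\<sigma> \<subseteq> \<rho>" using absorb[OF T \<rho>(1) \<sigma> _ w(1,2) w(3)[symmetric]] by blast
    hence "pt ` insert x \<sigma> \<subseteq> pt ` \<rho>" using M1\<rho> by auto
    hence "affine_dependent (pt ` \<rho>)" using depx affine_dependent_subset by blast
    thus False using T \<rho>(1) unfolding triangulation_def by blast
  next
    case False
    have XY: "X = A + B - Y" using rel by (simp add: X_def Y_def A_def B_def algebra_simps)
    have "R = (s - u/2) *\<^sub>R Y + (v/2) *\<^sub>R Z + (1/4 - s/2 + u/2) *\<^sub>R A + (1/4 - s/2 + u/2) *\<^sub>R B"
      unfolding Rexp uvZ(5) XY by (rule id3)
    also have "\<dots> \<in> convex hull (pt ` ({a,b,y} \<union> D))"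
    proof (rule conv4)
      show "Y \<in> convex hull (pt ` ({a,b,y} \<union> D))" by (auto simp: Y_def intro!: hull_inc)
      have "\<rho> - {x} \<subseteq> {a,b,y} \<union> D" using D_def by auto
      hence "convex hull (pt ` (\<rho> - {x})) \<subseteq> convex hull (pt ` ({a,b,y} \<union> D))" by (intro hull_mono image_mono)
      thus "Z \<in> convex hull (pt ` ({a,b,y} \<union> D))" "A \<in> convex hull (pt ` ({a,b,y} \<union> D))"
        "B \<in> convex hull (pt ` ({a,b,y} \<union> D))"
        using uvZ(4) A\<rho> B\<rho> by auto
    qed (use False uvZ t0 s_def in auto)
    finally have "R \<in> convex hull (pt ` ({a,b,y} \<union> D))" .
    hence "\<sigma> \<subseteq> {a,b,y} \<union> D" using absorb[OF T M2D \<sigma> _ w(1,2) w(3)[symmetric]] by blast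
    hence "pt ` insert y \<sigma> \<subseteq> pt ` ({a,b,y} \<union> D)" by auto
    hence "affine_dependent (pt ` ({a,b,y} \<union> D))" using depy affine_dependent_subset by blast
    thus False using T M2D unfolding triangulation_def by blast
  qed
qed



lemma n2: "{s::nat. s < Suc (Suc 0)} = {0,Suc 0}" by auto
lemma n3: "{s::nat. s < Suc (Suc (Suc 0))} = {0,Suc 0,Suc (Suc 0)}" by auto
lemma Xplus2: "Xplus [p,q] [h1,h2] = {(p,h1),(q,h2)}"
  unfolding Xplus_def by (simp add: setcompr_eq_image n2)
lemma Xminus2: "Xminus [p,q] [h1,h2] = {(q,h1),(p,h2)}"
  unfolding Xminus_def by (simp add: setcompr_eq_image n2)
lemma Xplus3: "Xplus [p,q,r] [h1,h2,h3] = {(p,h1),(q,h2),(r,h3)}"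
  unfolding Xplus_def by (simp add: setcompr_eq_image n3)
lemma Xminus3: "Xminus [p,q,r] [h1,h2,h3] = {(q,h1),(r,h2),(p,h3)}"
  unfolding Xminus_def by (simp add: setcompr_eq_image n3)

lemma dep6:
  fixes p0 :: "'a::real_vector"
  assumes "distinct [p0,p1,p2,p3,p4,p5]" "p0 = p1 + p2 + p3 - p4 - p5" "{p0,p1,p2,p3,p4,p5} \<subseteq> S"
  shows "affine_dependent S"
proof -
  define U where "U v = (if v = p0 then -1 else if v = p1 \<or> v = p2 \<or> v = p3 then 1 else (-1::real))" for v
  have Uv: "U p0 = -1" "U p1 = 1" "U p2 = 1" "U p3 = 1" "U p4 = -1" "U p5 = -1"
    using assms(1) by (auto simp: U_def)
  have s1: "sum U {p0,p1,p2,p3,p4,p5} = U p0 + U p1 + U p2 + U p3 + U p4 + U p5"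
    using assms(1) by (simp add: add.assoc)
  have s2: "(\<Sum>v\<in>{p0,p1,p2,p3,p4,p5}. U v *\<^sub>R v) = U p0 *\<^sub>R p0 + U p1 *\<^sub>R p1 + U p2 *\<^sub>R p2 + U p3 *\<^sub>R p3 + U p4 *\<^sub>R p4 + U p5 *\<^sub>R p5"
    using assms(1) by (simp add: add.assoc)
  have "sum U {p0,p1,p2,p3,p4,p5} = 0" unfolding s1 Uv by simp
  moreover have "(\<Sum>v\<in>{p0,p1,p2,p3,p4,p5}. U v *\<^sub>R v) = 0"
    unfolding s2 Uv by (simp add: assms(2) algebra_simps)
  moreover have "U p0 \<noteq> 0" by (simp add: Uv)
  ultimately show ?thesis unfolding affine_dependent_explicit using assms(3)
    by (intro exI[of _ "{p0,p1,p2,p3,p4,p5}"] exI[of _ U]) auto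
qed


lemma rep6:
  fixes g :: "'b \<Rightarrow> 'a::euclidean_space"
  assumes d: "distinct [a,b,u1,u2,u3,u4]" and t: "0 < t" "t < 1"
  shows "\<exists>w. (\<forall>v\<in>{a,b,u1,u2,u3,u4}. 0 < w v) \<and> sum w {a,b,u1,u2,u3,u4} = 1 \<and>
     (\<Sum>v\<in>{a,b,u1,u2,u3,u4}. w v *\<^sub>R g v) = ((2-t)/4) *\<^sub>R (g a + g b) +
        (t/2) *\<^sub>R ((1/4) *\<^sub>R g u1 + (1/4) *\<^sub>R g u2 + (1/4) *\<^sub>R g u3 + (1/4) *\<^sub>R g u4)"
proof -
  define w where "w v = (if v = a \<or> v = b then (2-t)/4 else t/8)" for v
  have wv: "w a = (2-t)/4" "w b = (2-t)/4" "w u1 = t/8" "w u2 = t/8" "w u3 = t/8" "w u4 = t/8"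
    using d by (auto simp: w_def)
  have s1: "sum w {a,b,u1,u2,u3,u4} = w a + w b + w u1 + w u2 + w u3 + w u4"
    using d by (simp add: add.assoc)
  have s2: "(\<Sum>v\<in>{a,b,u1,u2,u3,u4}. w v *\<^sub>R g v) = w a *\<^sub>R g a + w b *\<^sub>R g b + w u1 *\<^sub>R g u1
      + w u2 *\<^sub>R g u2 + w u3 *\<^sub>R g u3 + w u4 *\<^sub>R g u4"
    using d by (simp add: add.assoc)
  have "\<forall>v\<in>{a,b,u1,u2,u3,u4}. 0 < w v" using t by (auto simp: w_def)
  moreover have "sum w {a,b,u1,u2,u3,u4} = 1" unfolding s1 wv by (simp add: field_simps)
  moreover have "(\<Sum>v\<in>{a,b,u1,u2,u3,u4}. w v *\<^sub>R g v) = ((2-t)/4) *\<^sub>R (g a + g b) +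
        (t/2) *\<^sub>R ((1/4) *\<^sub>R g u1 + (1/4) *\<^sub>R g u2 + (1/4) *\<^sub>R g u3 + (1/4) *\<^sub>R g u4)"
    unfolding s2 wv
    by (rule euclidean_eqI) (simp add: inner_add_left inner_diff_left, simp add: field_simps)
  ultimately show ?thesis by blast
qed

theorem proposition5p6:
  fixes lab :: "'f::finite \<Rightarrow> 5 set"
    and C :: "5 set \<Rightarrow> 5 \<Rightarrow> 5 \<Rightarrow> (5 \<times> 'f) set set set"
    and T :: "(5 \<times> 'f) set set"
    and i j l :: 5 and f1 f2 :: 'f
  assumes "\<forall>f. card (lab f) = 2"
    and "hyp_shape lab C" and "hyp1 lab C" and "hyp2 lab C" and "hyp3 lab C"
    and "T \<in> S_C lab C"
    and "distinct [i, j, l]"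
    and "f1 \<in> Delta lab i j" and "f2 \<in> Delta lab i l"
  shows "\<not> has_flip T (Xplus [i, j] [f1, f2]) (Xminus [i, j] [f1, f2])"
proof
  assume flip: "has_flip T (Xplus [i, j] [f1, f2]) (Xminus [i, j] [f1, f2])"
  have dij: "i \<noteq> j" "j \<noteq> i" "i \<noteq> l" "l \<noteq> i" "j \<noteq> l" "l \<noteq> j" using assms(7) by auto
  obtain k g2 g3 where kk: "k \<notin> {i, j, l}" "g2 \<in> Delta lab j k" "g3 \<in> Delta lab k i"
    "T3 i j k f1 g2 g3 \<in> C (UNIV - {l}) i j"
    using assms(5,7,8) unfolding hyp3_def by blast
  have dk: "k \<noteq> i" "i \<noteq> k" "k \<noteq> j" "j \<noteq> k" "k \<noteq> l" "l \<noteq> k" using kk(1) by auto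
  have labs: "lab f1 = {i,j}" "lab f2 = {i,l}" "lab g2 = {j,k}" "lab g3 = {k,i}"
    using assms(8,9) kk(2,3) by (auto simp: Delta_def)
  have df: "f1 \<noteq> f2" "f2 \<noteq> f1" "f1 \<noteq> g2" "g2 \<noteq> f1" "f1 \<noteq> g3" "g3 \<noteq> f1"
     "f2 \<noteq> g2" "g2 \<noteq> f2" "f2 \<noteq> g3" "g3 \<noteq> f2" "g2 \<noteq> g3" "g3 \<noteq> g2"
    using labs dij dk by (auto simp: doubleton_eq_iff)
  note neq = dij dk df
  have Tt: "triangulation T" using assms(6) by (simp add: S_C_def)
  define \<sigma> where "\<sigma> = {(j,f1),(i,f2),(j,g2),(k,g2),(k,g3),(i,g3)}"
  have \<sigma>T: "\<sigma> \<in> T"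
  proof -
    have cS: "card (UNIV - {l}) = 4" by (simp add: card_Diff_singleton)
    have v: "valid_Sij (UNIV - {l}) i j" using cS dij by (simp add: valid_Sij_def)
    have r: "rep_ok lab (UNIV - {l}) i j k f1 g2 g3"
      using neq assms(8) kk(2,3) by (auto simp: rep_ok_def zonotopal3_def)
    have "(Xset [i, j, k] [f1, g2, g3] - {(i, f1)}) \<union> {(i, f2)} \<in> T"
    proof -
      have Sii: "\<forall>S i j k l f1 f2 f3 f. valid_Sij S i j \<and> k \<in> S - {i, j} \<and>
        rep_ok lab S i j k f1 f2 f3 \<and> T3 i j k f1 f2 f3 \<in> C S i j \<and>
        UNIV - S = {l} \<and> f \<in> Delta lab i l \<longrightarrow>
        (Xset [i, j, k] [f1, f2, f3] - {(i, f1)}) \<union> {(i, f)} \<in> T"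
        by (rule conjunct2[OF conjunct2[OF assms(6)[unfolded S_C_def mem_Collect_eq]]])
      have k1: "k \<in> (UNIV - {l}) - {i, j}" using dk by auto
      have k2: "UNIV - (UNIV - {l}) = {l}" by auto
      have prem: "valid_Sij (UNIV - {l}) i j \<and> k \<in> (UNIV - {l}) - {i, j} \<and>
        rep_ok lab (UNIV - {l}) i j k f1 g2 g3 \<and> T3 i j k f1 g2 g3 \<in> C (UNIV - {l}) i j \<and>
        UNIV - (UNIV - {l}) = {l} \<and> f2 \<in> Delta lab i l"
        using v r kk(4) assms(9) k1 k2 by (intro conjI)
      show ?thesis using prem by (rule Sii[rule_format])
    qed
    moreover have "(Xset [i, j, k] [f1, g2, g3] - {(i, f1)}) \<union> {(i, f2)} = \<sigma>"
      unfolding \<sigma>_def Xset_def Xplus3 Xminus3 using neq by auto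
    ultimately show ?thesis by simp
  qed
  have XP: "Xplus [i, j] [f1, f2] = {(i,f1),(j,f2)}" by (rule Xplus2)
  have XM: "Xminus [i, j] [f1, f2] = {(j,f1),(i,f2)}" by (rule Xminus2)
  obtain L where tp: "Tplus {(i,f1),(j,f2)} {(j,f1),(i,f2)} \<subseteq> T"
    and LL: "\<forall>\<tau>\<in>maximal_elems (Tplus {(i,f1),(j,f2)} {(j,f1),(i,f2)}). link T \<tau> = L"
    using flip unfolding has_flip_def XP XM by blast
  have m1: "{(j,f1),(i,f2),(j,f2)} \<in> maximal_elems (Tplus {(i,f1),(j,f2)} {(j,f1),(i,f2)})"
    unfolding maximal_elems_def Tplus_def using neq by auto
  have m2: "{(j,f1),(i,f2),(i,f1)} \<in> maximal_elems (Tplus {(i,f1),(j,f2)} {(j,f1),(i,f2)})"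
    unfolding maximal_elems_def Tplus_def using neq by auto
  have M1: "{(j,f1),(i,f2),(j,f2)} \<in> T" using m1 tp unfolding maximal_elems_def by blast
  have M2: "{(j,f1),(i,f2),(i,f1)} \<in> T" using m2 tp unfolding maximal_elems_def by blast
  have Leq: "link T {(j,f1),(i,f2),(j,f2)} = link T {(j,f1),(i,f2),(i,f1)}"
    using LL m1 m2 by auto
  have dist: "distinct [(j,f1),(i,f2),(j,f2),(i,f1)]" using neq by auto
  have rel: "pt (j,f2) + pt (i,f1) = pt (j,f1) + pt (i,f2)"
    by (simp add: pt_def algebra_simps)
  have depx: "affine_dependent (pt ` insert (j,f2) \<sigma>)"
  proof (rule dep6[of "pt (j,f2)" "pt (i,f2)" "pt (j,g2)" "pt (k,g3)" "pt (k,g2)" "pt (i,g3)"])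
    show "distinct [pt (j,f2), pt (i,f2), pt (j,g2), pt (k,g3), pt (k,g2), pt (i,g3)]"
      using neq by auto
    show "pt (j, f2) = pt (i, f2) + pt (j, g2) + pt (k, g3) - pt (k, g2) - pt (i, g3)"
      by (simp add: pt_def algebra_simps)
  qed (auto simp: \<sigma>_def)
  have depy: "affine_dependent (pt ` insert (i,f1) \<sigma>)"
  proof (rule dep6[of "pt (i,f1)" "pt (j,f1)" "pt (k,g2)" "pt (i,g3)" "pt (j,g2)" "pt (k,g3)"])
    show "distinct [pt (i,f1), pt (j,f1), pt (k,g2), pt (i,g3), pt (j,g2), pt (k,g3)]"
      using neq by auto
    show "pt (i, f1) = pt (j, f1) + pt (k, g2) + pt (i, g3) - pt (j, g2) - pt (k, g3)"
      by (simp add: pt_def algebra_simps)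
  qed (auto simp: \<sigma>_def)
  define c where "c = (1/4) *\<^sub>R pt (j,g2) + (1/4) *\<^sub>R pt (k,g2) + (1/4) *\<^sub>R pt (k,g3) + (1/4) *\<^sub>R pt (i,g3)"
  have cc: "c \<in> convex hull (range pt)"
    unfolding c_def by (rule conv4) (auto intro: hull_inc)
  have d6: "distinct [(j,f1),(i,f2),(j,g2),(k,g2),(k,g3),(i,g3)]" using neq by auto
  show False
  proof (rule key[OF Tt M1 M2 Leq dist rel \<sigma>T depx depy cc])
    fix t :: real assume "0 < t" "t < 1"
    thus "\<exists>w. (\<forall>v\<in>\<sigma>. 0 < w v) \<and> sum w \<sigma> = 1 \<and>
       (\<Sum>v\<in>\<sigma>. w v *\<^sub>R pt v) = ((2-t)/4) *\<^sub>R (pt (j,f1) + pt (i,f2)) + (t/2) *\<^sub>R c"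
      unfolding \<sigma>_def c_def by (rule rep6[OF d6])
  qed
qed


end
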